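(* Let $S_f$ and $S_g$ be two equivalent inequality sets in $\mathbf{x}=(x_1,\ldots,x_n)$ (i.e., with the same solution set in $\mathbb{R}^n$), and fix the variable order $x_1\prec\cdots\prec x_n$. Then their reduced minimal characterization sets are the same: the equality parts coincide and the inequality parts are trivially equivalent.
   Context: An inequality set is a finite set $S=\{f_i\ge 0: i=1,\ldots,m\}$ with each $f_i$ a nonzero homogeneous linear polynomial in $\mathbf{x}$ with real coefficients; its solutions are the points of $\mathbb{R}^n$ satisfying all inequalities; a subset of $S$ is an inequality set whose polynomials form a subset of $\{f_1,\ldots,f_m\}$. The equality $f_k=0$ is an implied equality of $S$ if $f_k(\mathbf{x})=0$ for every solution of $S$. Inequalities $f_1\ge0,\ldots,f_k\ge0$ imply $f\ge0$ if every $\mathbf{x}$ satisfying the former satisfies $f(\mathbf{x})\ge0$; an inequality of a set is redundant if implied by the other inequalities of the set. Two inequality sets are equivalent if they have the same solution set. A subset $S'$ of $S$ is a minimal characterization set of $S$ if $S'$ is equivalent to $S$ and contains no redundant inequality. Two inequalities $f\ge0$, $g\ge 0$ are trivially equivalent if $f=c\,g$ for some real $c>0$; two inequality sets are trivially equivalent if they have the same number of inequalities and each inequality of either set is trivially equivalent to some inequality of the other. For a finite system $E$ of homogeneous linear equations of rank $\tilde n$, its Gauss–Jordan reduced form (reduced row echelon form) w.r.t. $x_1\prec\cdots\prec x_n$ is the unique equivalent system $\{x_{k_i}-U_i=0: i=1,\ldots,\tilde n\}$, $k_1<\cdots<k_{\tilde n}$, each $U_i$ a real linear combination of non-pivot variables.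 For an inequality set $S_f=\{f_i\ge0\}$: let $I$ be the set of indices $k$ with $f_k=0$ an implied equality of $S_f$, $E=\{f_k=0:k\in I\}$, and $\widetilde E=\{x_{k_i}-U_i=0\}$ its Gauss–Jordan reduced form; let $R_f$ be the set of nonzero polynomials obtained from $f_j$, $j\notin I$, by substituting $U_i$ for $x_{k_i}$ for all $i$. The reduced minimal characterization set of $S_f$ is $\widetilde{E}\cup S_{r'}$, where $S_{r'}$ is a minimal characterization set of $\{g\ge 0: g\in R_f\}$ (unique up to trivial equivalence). *)

theory Defs
  imports Complex_Main
begin

text \<open>Homogeneous linear polynomials in x_0,...,x_(n-1) (0-based indices, the paper's
x_1,...,x_n) are represented by coefficient vectors a :: nat => real with a i = 0 for i >= n.\<close>

definition vecs :: "nat \<Rightarrow> (nat \<Rightarrow> real) set" where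
  "vecs n = {x. \<forall>i\<ge>n. x i = 0}"

definition lin :: "nat \<Rightarrow> (nat \<Rightarrow> real) \<Rightarrow> (nat \<Rightarrow> real) \<Rightarrow> real" where
  "lin n a x = (\<Sum>i<n. a i * x i)"

definition ineq_set :: "nat \<Rightarrow> (nat \<Rightarrow> real) set \<Rightarrow> bool" where
  "ineq_set n S \<longleftrightarrow> finite S \<and> S \<subseteq> vecs n \<and> (\<lambda>_. 0) \<notin> S"

definition sols :: "nat \<Rightarrow> (nat \<Rightarrow> real) set \<Rightarrow> (nat \<Rightarrow> real) set" where
  "sols n S = {x \<in> vecs n. \<forall>f\<in>S. lin n f x \<ge> 0}"

definition implied_eq :: "nat \<Rightarrow> (nat \<Rightarrow> real) set \<Rightarrow> (nat \<Rightarrow> real) \<Rightarrow> bool" where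
  "implied_eq n S f \<longleftrightarrow> f \<in> S \<and> (\<forall>x\<in>sols n S. lin n f x = 0)"

definition implied_eqs :: "nat \<Rightarrow> (nat \<Rightarrow> real) set \<Rightarrow> (nat \<Rightarrow> real) set" where
  "implied_eqs n S = {f \<in> S. implied_eq n S f}"

definition redundant :: "nat \<Rightarrow> (nat \<Rightarrow> real) set \<Rightarrow> (nat \<Rightarrow> real) \<Rightarrow> bool" where
  "redundant n S f \<longleftrightarrow> f \<in> S \<and> (\<forall>x\<in>sols n (S - {f}). lin n f x \<ge> 0)"

definition min_char_set :: "nat \<Rightarrow> (nat \<Rightarrow> real) set \<Rightarrow> (nat \<Rightarrow> real) set \<Rightarrow> bool" where
  "min_char_set n S M \<longleftrightarrow> M \<subseteq> S \<and> sols n M = sols n S \<and> (\<forall>f\<in>M. \<not> redundant n M f)"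

definition triv_equiv :: "(nat \<Rightarrow> real) \<Rightarrow> (nat \<Rightarrow> real) \<Rightarrow> bool" where
  "triv_equiv f g \<longleftrightarrow> (\<exists>c>0. f = (\<lambda>i. c * g i))"

definition triv_equiv_sets :: "(nat \<Rightarrow> real) set \<Rightarrow> (nat \<Rightarrow> real) set \<Rightarrow> bool" where
  "triv_equiv_sets A B \<longleftrightarrow> card A = card B \<and>
     (\<forall>f\<in>A. \<exists>g\<in>B. triv_equiv f g) \<and> (\<forall>g\<in>B. \<exists>f\<in>A. triv_equiv g f)"

definition eq_sols :: "nat \<Rightarrow> (nat \<Rightarrow> real) set \<Rightarrow> (nat \<Rightarrow> real) set" where
  "eq_sols n E = {x \<in> vecs n. \<forall>e\<in>E. lin n e x = 0}"

definition pivot :: "(nat \<Rightarrow> real) \<Rightarrow> nat" where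
  "pivot g = (LEAST k. g k \<noteq> 0)"

text \<open>G = {x_(k_i) - U_i} is the Gauss-Jordan reduced form of E: an equivalent system
of nonzero rows, each with leading coefficient 1 at its pivot, and every other row
vanishing in that pivot column (so U_i involves only non-pivot variables).\<close>
definition gj_reduced_form :: "nat \<Rightarrow> (nat \<Rightarrow> real) set \<Rightarrow> (nat \<Rightarrow> real) set \<Rightarrow> bool" where
  "gj_reduced_form n E G \<longleftrightarrow> finite G \<and> G \<subseteq> vecs n \<and> (\<lambda>_. 0) \<notin> G \<and>
     eq_sols n G = eq_sols n E \<and>
     (\<forall>g\<in>G. g (pivot g) = 1 \<and> (\<forall>g'\<in>G. g' \<noteq> g \<longrightarrow> g' (pivot g) = 0))"

text \<open>Substituting U_i = x_(k_i) - g_i for x_(k_i) in the linear form a.\<close>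
definition subst :: "(nat \<Rightarrow> real) set \<Rightarrow> (nat \<Rightarrow> real) \<Rightarrow> (nat \<Rightarrow> real)" where
  "subst G a = (\<lambda>i. a i - (\<Sum>g\<in>G. a (pivot g) * g i))"

definition reduced_ineqs :: "nat \<Rightarrow> (nat \<Rightarrow> real) set \<Rightarrow> (nat \<Rightarrow> real) set \<Rightarrow> (nat \<Rightarrow> real) set" where
  "reduced_ineqs n S G = {subst G f | f. f \<in> S \<and> \<not> implied_eq n S f} - {\<lambda>_. 0}"

end

theory Submission
  imports Defs
begin

lemma lin_comb: "lin n f (\<lambda>i. c * x i + d * y i) = c * lin n f x + d * lin n f y"
  by (simp add: lin_def sum.distrib sum_distrib_left algebra_simps)

lemma lin_diff: "lin n f (\<lambda>i. x i - y i) = lin n f x - lin n f y"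
  by (simp add: lin_def sum_subtractf algebra_simps)

lemma lin_sum: "lin n f (\<lambda>i. \<Sum>k\<in>K. y k i) = (\<Sum>k\<in>K. lin n f (y k))"
  unfolding lin_def by (simp add: sum_distrib_left) (rule sum.swap)

lemma lin_zero: "lin n f (\<lambda>_. 0) = 0" by (simp add: lin_def)

lemma lin_unit: "i < n \<Longrightarrow> lin n f (\<lambda>j. if j = i then 1 else 0) = f i"
  by (simp add: lin_def if_distrib cong: if_cong)

lemma pivot_props:
  assumes "g \<in> vecs n" "g \<noteq> (\<lambda>_. 0)"
  shows "pivot g < n \<and> g (pivot g) \<noteq> 0"
proof -
  obtain k where k: "g k \<noteq> 0" using assms(2) by auto
  have "k < n"
  proof (rule ccontr)
    assume "\<not> k < n" then have "g k = 0" using assms(1) unfolding vecs_def by simp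
    with k show False by simp
  qed
  have "pivot g \<le> k" unfolding pivot_def using k by (rule Least_le)
  moreover have "g (pivot g) \<noteq> 0" unfolding pivot_def using k by (rule LeastI)
  ultimately show ?thesis using \<open>k < n\<close> by simp
qed

lemma pivot_before: "i < pivot g \<Longrightarrow> g i = 0"
  unfolding pivot_def using not_less_Least by blast

lemma pivot_eqI: "g k \<noteq> 0 \<Longrightarrow> (\<forall>i<k. g i = 0) \<Longrightarrow> pivot g = k"
  unfolding pivot_def by (rule Least_equality) (assumption, metis not_less)

definition rref :: "nat \<Rightarrow> (nat \<Rightarrow> real) set \<Rightarrow> bool" where
  "rref n G \<longleftrightarrow> finite G \<and> G \<subseteq> vecs n \<and> (\<lambda>_. 0) \<notin> G \<and>
     (\<forall>g\<in>G. g (pivot g) = 1 \<and> (\<forall>g'\<in>G. g' \<noteq> g \<longrightarrow> g' (pivot g) = 0))"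

lemma gj_rref: "gj_reduced_form n E G \<Longrightarrow> rref n G \<and> eq_sols n G = eq_sols n E"
  unfolding gj_reduced_form_def rref_def by blast

lemma rref_delta: "rref n G \<Longrightarrow> g \<in> G \<Longrightarrow> h \<in> G \<Longrightarrow> h (pivot g) = (if h = g then 1 else 0)"
  unfolding rref_def by auto

lemma rref_pivot_inj: "rref n G \<Longrightarrow> g \<in> G \<Longrightarrow> h \<in> G \<Longrightarrow> pivot g = pivot h \<Longrightarrow> g = h"
  using rref_delta[of n G g h] rref_delta[of n G h h] by (metis one_neq_zero)

lemma rref_pivot_lt: "rref n G \<Longrightarrow> g \<in> G \<Longrightarrow> pivot g < n"
  unfolding rref_def using pivot_props by blast

lemma sum_delta_lemma:
  assumes "\<forall>g\<in>G. p g < (n::nat)"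
  shows "(\<Sum>i<n. c i * (\<Sum>g\<in>G. if i = p g then d g else 0)) = (\<Sum>g\<in>G. c (p g) * (d g :: real))"
proof -
  have "(\<Sum>i<n. c i * (\<Sum>g\<in>G. if i = p g then d g else 0)) = (\<Sum>i<n. \<Sum>g\<in>G. if i = p g then c i * d g else 0)"
    by (simp add: sum_distrib_left if_distrib cong: if_cong)
  also have "\<dots> = (\<Sum>g\<in>G. \<Sum>i<n. if i = p g then c i * d g else 0)" by (rule sum.swap)
  also have "\<dots> = (\<Sum>g\<in>G. c (p g) * d g)"
    by (rule sum.cong) (use assms in auto)
  finally show ?thesis .
qed

lemma lin_subst: "lin n (subst G a) x = lin n a x - (\<Sum>g\<in>G. a (pivot g) * lin n g x)"
proof -
  have "lin n (subst G a) x = (\<Sum>i<n. a i * x i - (\<Sum>g\<in>G. a (pivot g) * g i * x i))"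
    unfolding lin_def subst_def by (rule sum.cong) (auto simp: left_diff_distrib sum_distrib_right)
  also have "\<dots> = (\<Sum>i<n. a i * x i) - (\<Sum>i<n. \<Sum>g\<in>G. a (pivot g) * g i * x i)"
    by (rule sum_subtractf)
  also have "(\<Sum>i<n. \<Sum>g\<in>G. a (pivot g) * g i * x i) = (\<Sum>g\<in>G. a (pivot g) * lin n g x)"
    by (subst sum.swap) (simp add: lin_def sum_distrib_left mult.assoc)
  finally show ?thesis by (simp add: lin_def)
qed

definition proj :: "nat \<Rightarrow> (nat \<Rightarrow> real) set \<Rightarrow> (nat \<Rightarrow> real) \<Rightarrow> (nat \<Rightarrow> real)" where
  "proj n G x = (\<lambda>i. x i - (\<Sum>g\<in>G. if i = pivot g then lin n g x else 0))"

lemma lin_proj: assumes "rref n G" shows "lin n a (proj n G x) = lin n (subst G a) x"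
proof -
  have "lin n a (proj n G x) = lin n a x - (\<Sum>i<n. a i * (\<Sum>g\<in>G. if i = pivot g then lin n g x else 0))"
    by (simp add: lin_def proj_def sum_subtractf algebra_simps)
  also have "(\<Sum>i<n. a i * (\<Sum>g\<in>G. if i = pivot g then lin n g x else 0)) = (\<Sum>g\<in>G. a (pivot g) * lin n g x)"
    by (rule sum_delta_lemma) (use rref_pivot_lt[OF assms] in blast)
  finally show ?thesis by (simp add: lin_subst)
qed

lemma rref_sum_self: assumes "rref n G" "h \<in> G"
  shows "(\<Sum>g\<in>G. h (pivot g) * c g) = c h"
proof -
  have "(\<Sum>g\<in>G. h (pivot g) * c g) = (\<Sum>g\<in>G. if g = h then c g else 0)"
    by (rule sum.cong) (use rref_delta[OF assms(1) _ assms(2)] in auto)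
  also have "\<dots> = c h" using assms unfolding rref_def by simp
  finally show ?thesis .
qed

lemma lin_subst_eq: assumes "rref n G" "x \<in> eq_sols n G" shows "lin n (subst G a) x = lin n a x"
  using assms(2) by (simp add: lin_subst eq_sols_def)

lemma proj_vecs: assumes "rref n G" "x \<in> vecs n" shows "proj n G x \<in> vecs n"
  using assms rref_pivot_lt[OF assms(1)] unfolding vecs_def proj_def
  by (auto intro!: sum.neutral) (metis not_le)

lemma proj_eq_sols: assumes "rref n G" "x \<in> vecs n" shows "proj n G x \<in> eq_sols n G"
  unfolding eq_sols_def using proj_vecs[OF assms]
  by (auto simp: lin_proj[OF assms(1)] lin_subst rref_sum_self[OF assms(1), of _ "\<lambda>g. lin n g x"])


lemma rref_annih:
  assumes G: "rref n G" and b: "b \<in> vecs n" and piv: "\<forall>g\<in>G. b (pivot g) = 0"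
    and van: "\<forall>x\<in>eq_sols n G. lin n b x = 0"
  shows "b = (\<lambda>_. 0)"
proof
  fix i
  show "b i = 0"
  proof (cases "i < n")
    case False then show ?thesis using b unfolding vecs_def by simp
  next
    case True
    define x where "x = (\<lambda>k. (if k = i then 1 else 0) - (\<Sum>g\<in>G. if k = pivot g then g i else (0::real)))"
    have lx: "lin n h x = h i - (\<Sum>g\<in>G. h (pivot g) * g i)" for h
    proof -
      have "lin n h x = lin n h (\<lambda>k. if k = i then 1 else 0) - lin n h (\<lambda>k. \<Sum>g\<in>G. if k = pivot g then g i else 0)"
        unfolding x_def by (rule lin_diff)
      also have "lin n h (\<lambda>k. if k = i then 1 else 0) = h i" using True by (rule lin_unit)
      also have "lin n h (\<lambda>k. \<Sum>g\<in>G. if k = pivot g then g i else 0) = (\<Sum>g\<in>G. h (pivot g) * g i)"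
        unfolding lin_def by (rule sum_delta_lemma) (use rref_pivot_lt[OF G] in blast)
      finally show ?thesis .
    qed
    have xv: "x \<in> vecs n"
      using True rref_pivot_lt[OF G] unfolding vecs_def x_def
      by (auto intro!: sum.neutral) (metis leD)
    have "x \<in> eq_sols n G"
      unfolding eq_sols_def using xv by (auto simp: lx rref_sum_self[OF G, of _ "\<lambda>g. g i"])
    then have "lin n b x = 0" using van by blast
    moreover have "lin n b x = b i" using piv by (simp add: lx)
    ultimately show ?thesis by simp
  qed
qed

lemma subst_vecs: "rref n G \<Longrightarrow> a \<in> vecs n \<Longrightarrow> subst G a \<in> vecs n"
  unfolding rref_def vecs_def subst_def by (auto intro!: sum.neutral)

lemma subst_pivot: assumes G: "rref n G" and h: "h \<in> G" shows "subst G a (pivot h) = 0"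
proof -
  have "(\<Sum>g\<in>G. a (pivot g) * g (pivot h)) = (\<Sum>g\<in>G. if g = h then a (pivot g) else 0)"
    by (rule sum.cong) (simp_all add: rref_delta[OF G h])
  also have "\<dots> = a (pivot h)" using G h unfolding rref_def by simp
  finally show ?thesis unfolding subst_def by simp
qed

lemma rref_span:
  assumes G: "rref n G" and a: "a \<in> vecs n" and van: "\<forall>x\<in>eq_sols n G. lin n a x = 0"
  shows "a i = (\<Sum>g\<in>G. a (pivot g) * g i)"
proof -
  have "subst G a = (\<lambda>_. 0)"
    by (rule rref_annih[OF G subst_vecs[OF G a]])
       (use subst_pivot[OF G] lin_subst_eq[OF G] van in auto)
  then have "subst G a i = 0" by simp
  then show ?thesis unfolding subst_def by simp
qed

lemma rref_pivot_in:
  assumes G1: "rref n G1" and G2: "rref n G2" and eq: "eq_sols n G1 = eq_sols n G2" and h: "h \<in> G2"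
  shows "pivot h \<in> pivot ` G1"
proof -
  have hv: "h \<in> vecs n" and hnz: "h \<noteq> (\<lambda>_. 0)" using G2 h unfolding rref_def by auto
  have van: "\<forall>x\<in>eq_sols n G1. lin n h x = 0" using eq h unfolding eq_sols_def by auto
  have hs: "h i = (\<Sum>g\<in>G1. h (pivot g) * g i)" for i by (rule rref_span[OF G1 hv van])
  define S where "S = {g\<in>G1. h (pivot g) \<noteq> 0}"
  have fin: "finite S" using G1 unfolding rref_def S_def by auto
  have hs2: "h i = (\<Sum>g\<in>S. h (pivot g) * g i)" for i
  proof -
    have "(\<Sum>g\<in>G1. h (pivot g) * g i) = (\<Sum>g\<in>S. h (pivot g) * g i)"
      unfolding S_def using G1 unfolding rref_def by (intro sum.mono_neutral_right) auto
    then show ?thesis using hs[of i] by simp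
  qed
  have "S \<noteq> {}"
  proof
    assume "S = {}" then have "h i = 0" for i using hs2[of i] by simp
    then have "h = (\<lambda>_. 0)" by auto
    with hnz show False by simp
  qed
  define p where "p = Min (pivot ` S)"
  have "p \<in> pivot ` S" unfolding p_def using fin \<open>S \<noteq> {}\<close> by simp
  then obtain g0 where g0: "g0 \<in> S" "pivot g0 = p" by auto
  have pmin: "g \<in> S \<Longrightarrow> p \<le> pivot g" for g unfolding p_def using fin by simp
  have "h i = 0" if "i < p" for i
  proof -
    have "(\<Sum>g\<in>S. h (pivot g) * g i) = 0"
      using pmin that by (intro sum.neutral) (metis less_le_trans mult_zero_right pivot_before)
    then show ?thesis using hs2[of i] by simp
  qed
  moreover have "h p \<noteq> 0" using g0 unfolding S_def by auto
  ultimately have "pivot h = p" by (intro pivot_eqI) auto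
  then show ?thesis using g0 unfolding S_def by (metis (no_types, lifting) image_eqI mem_Collect_eq)
qed

lemma rref_unique_sub:
  assumes G1: "rref n G1" and G2: "rref n G2" and eq: "eq_sols n G1 = eq_sols n G2"
  shows "G2 \<subseteq> G1"
proof
  fix h assume h: "h \<in> G2"
  have hv: "h \<in> vecs n" using G2 h unfolding rref_def by auto
  have van: "\<forall>x\<in>eq_sols n G1. lin n h x = 0" using eq h unfolding eq_sols_def by auto
  obtain gh where gh: "gh \<in> G1" "pivot gh = pivot h" using rref_pivot_in[OF G1 G2 eq h] by auto
  have coef: "h (pivot g) = (if g = gh then 1 else 0)" if g: "g \<in> G1" for g
  proof -
    obtain h' where h': "h' \<in> G2" "pivot h' = pivot g" using rref_pivot_in[OF G2 G1 eq[symmetric] g] by auto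
    have "h (pivot g) = (if h = h' then 1 else 0)" using rref_delta[OF G2 h'(1) h] h' by simp
    moreover have "(h = h') = (g = gh)"
    proof
      assume "h = h'" then have "pivot g = pivot gh" using gh h' by simp
      then show "g = gh" by (rule rref_pivot_inj[OF G1 g gh(1)])
    next
      assume "g = gh" then have "pivot h = pivot h'" using gh h' by simp
      then show "h = h'" by (rule rref_pivot_inj[OF G2 h h'(1)])
    qed
    ultimately show ?thesis by simp
  qed
  have "h i = gh i" for i
  proof -
    have "h i = (\<Sum>g\<in>G1. h (pivot g) * g i)" by (rule rref_span[OF G1 hv van])
    also have "\<dots> = (\<Sum>g\<in>G1. if g = gh then g i else 0)" by (rule sum.cong) (auto simp: coef)
    also have "\<dots> = gh i" using G1 gh unfolding rref_def by simp
    finally show ?thesis .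
  qed
  then have "h = gh" by auto
  then show "h \<in> G1" using gh by simp
qed


lemma big_K:
  assumes "finite F" "\<forall>f\<in>F. (a f::real) > 0"
  shows "\<exists>K\<ge>0. \<forall>f\<in>F. K * a f + b f \<ge> 0"
proof (intro exI[of _ "\<Sum>f\<in>F. \<bar>b f\<bar> / a f"] conjI ballI)
  show "0 \<le> (\<Sum>f\<in>F. \<bar>b f\<bar> / a f)" using assms(2) by (intro sum_nonneg) auto
  fix f assume f: "f \<in> F"
  have "\<bar>b f\<bar> / a f \<le> (\<Sum>f\<in>F. \<bar>b f\<bar> / a f)"
    using assms f by (intro member_le_sum) auto
  then have "\<bar>b f\<bar> / a f * a f \<le> (\<Sum>f\<in>F. \<bar>b f\<bar> / a f) * a f"
    using assms(2) f by (intro mult_right_mono) auto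
  moreover have "a f \<noteq> 0" using assms(2) f by auto
  then have "\<bar>b f\<bar> / a f * a f = \<bar>b f\<bar>" by simp
  ultimately have "\<bar>b f\<bar> \<le> (\<Sum>f\<in>F. \<bar>b f\<bar> / a f) * a f" by simp
  then show "0 \<le> (\<Sum>f\<in>F. \<bar>b f\<bar> / a f) * a f + b f" by linarith
qed

lemma sols_comb:
  assumes "x \<in> sols n S" "y \<in> sols n S" "c \<ge> 0" "d \<ge> 0"
  shows "(\<lambda>i. c * x i + d * y i) \<in> sols n S"
  using assms unfolding sols_def vecs_def by (auto simp: lin_comb)

lemma interior_pt:
  assumes "ineq_set n S"
  shows "\<exists>x0\<in>sols n S. \<forall>f\<in>S. \<not> implied_eq n S f \<longrightarrow> lin n f x0 > 0"
proof -
  define N where "N = {f\<in>S. \<not> implied_eq n S f}"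
  have finN: "finite N" using assms unfolding ineq_set_def N_def by auto
  have "\<forall>f\<in>N. \<exists>y. y \<in> sols n S \<and> lin n f y \<noteq> 0"
    unfolding N_def implied_eq_def by auto
  then obtain Y where Y: "\<And>f. f \<in> N \<Longrightarrow> Y f \<in> sols n S \<and> lin n f (Y f) \<noteq> 0" by metis
  define x0 where "x0 = (\<lambda>i. \<Sum>f\<in>N. Y f i)"
  have x0v: "x0 \<in> vecs n" using Y unfolding x0_def vecs_def sols_def by (auto intro!: sum.neutral)
  have lx: "lin n h x0 = (\<Sum>f\<in>N. lin n h (Y f))" for h unfolding x0_def by (rule lin_sum)
  have nn: "h \<in> S \<Longrightarrow> f \<in> N \<Longrightarrow> lin n h (Y f) \<ge> 0" for h f using Y[of f] unfolding sols_def by auto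
  have "x0 \<in> sols n S" unfolding sols_def using x0v by (auto simp: lx nn intro!: sum_nonneg)
  moreover have "lin n f x0 > 0" if "f \<in> S" "\<not> implied_eq n S f" for f
  proof -
    have fN: "f \<in> N" using that unfolding N_def by auto
    have "lin n f (Y f) > 0" using nn[OF that(1) fN] Y[OF fN] by linarith
    also have "lin n f (Y f) \<le> (\<Sum>g\<in>N. lin n f (Y g))"
      using finN fN nn[OF that(1)] by (intro member_le_sum) auto
    finally show ?thesis by (simp add: lx)
  qed
  ultimately show ?thesis by blast
qed

lemma implied_zero: "x \<in> sols n S \<Longrightarrow> f \<in> implied_eqs n S \<Longrightarrow> lin n f x = 0"
  unfolding implied_eqs_def implied_eq_def by auto

lemma sols_in_eq: "x \<in> sols n S \<Longrightarrow> x \<in> eq_sols n (implied_eqs n S)"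
  using implied_zero[of x n S] unfolding eq_sols_def sols_def by auto

lemma eq_sols_implied:
  assumes S: "ineq_set n S"
  shows "eq_sols n (implied_eqs n S) = {(\<lambda>i. a i - b i) | a b. a \<in> sols n S \<and> b \<in> sols n S}"
proof
  show "{(\<lambda>i. a i - b i) | a b. a \<in> sols n S \<and> b \<in> sols n S} \<subseteq> eq_sols n (implied_eqs n S)"
  proof clarify
    fix a b assume ab: "a \<in> sols n S" "b \<in> sols n S"
    show "(\<lambda>i. a i - b i) \<in> eq_sols n (implied_eqs n S)"
      using ab implied_zero[OF ab(1)] implied_zero[OF ab(2)]
      unfolding eq_sols_def by (auto simp: lin_diff sols_def vecs_def)
  qed
next
  show "eq_sols n (implied_eqs n S) \<subseteq> {(\<lambda>i. a i - b i) | a b. a \<in> sols n S \<and> b \<in> sols n S}"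
  proof
    fix x assume x: "x \<in> eq_sols n (implied_eqs n S)"
    obtain x0 where x0: "x0 \<in> sols n S" "\<And>f. f \<in> S \<Longrightarrow> \<not> implied_eq n S f \<Longrightarrow> lin n f x0 > 0"
      using interior_pt[OF S] by blast
    define N where "N = {f\<in>S. \<not> implied_eq n S f}"
    have finN: "finite N" using S unfolding ineq_set_def N_def by auto
    obtain K where K: "K \<ge> 0" "\<forall>f\<in>N. K * lin n f x0 + lin n f x \<ge> 0"
      using big_K[OF finN, of "\<lambda>f. lin n f x0" "\<lambda>f. lin n f x"] x0(2) unfolding N_def by auto
    define a where "a = (\<lambda>i. K * x0 i + 1 * x i)"
    define b where "b = (\<lambda>i. K * x0 i + 0 * x0 i)"
    have xv: "x \<in> vecs n" using x unfolding eq_sols_def by auto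
    have "a \<in> sols n S"
      unfolding sols_def
    proof (intro CollectI conjI ballI)
      show "a \<in> vecs n" using xv x0(1) unfolding a_def sols_def vecs_def by auto
      fix f assume f: "f \<in> S"
      have la: "lin n f a = K * lin n f x0 + 1 * lin n f x" unfolding a_def by (rule lin_comb)
      show "0 \<le> lin n f a"
      proof (cases "implied_eq n S f")
        case True
        then have "f \<in> implied_eqs n S" using f unfolding implied_eqs_def by auto
        then show ?thesis using implied_zero[OF x0(1)] x unfolding la eq_sols_def by auto
      next
        case False then show ?thesis using K f unfolding la N_def by auto
      qed
    qed
    moreover have "b \<in> sols n S" unfolding b_def by (rule sols_comb[OF x0(1) x0(1) K(1)]) simp
    moreover have "x = (\<lambda>i. a i - b i)" unfolding a_def b_def by auto
    ultimately show "x \<in> {(\<lambda>i. a i - b i) | a b. a \<in> sols n S \<and> b \<in> sols n S}" by blast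
  qed
qed

lemma sols_reduced:
  assumes S: "ineq_set n S" and G: "rref n G" and GE: "eq_sols n G = eq_sols n (implied_eqs n S)"
  shows "sols n (reduced_ineqs n S G) = {x\<in>vecs n. proj n G x \<in> sols n S}"
proof (intro set_eqI iffI)
  fix x assume x: "x \<in> sols n (reduced_ineqs n S G)"
  have xv: "x \<in> vecs n" using x unfolding sols_def by auto
  have pe: "proj n G x \<in> eq_sols n (implied_eqs n S)" using proj_eq_sols[OF G xv] GE by simp
  have "lin n f (proj n G x) \<ge> 0" if f: "f \<in> S" for f
  proof (cases "implied_eq n S f")
    case True
    then have "f \<in> implied_eqs n S" using f unfolding implied_eqs_def by auto
    then show ?thesis using pe unfolding eq_sols_def by auto
  next
    case False
    show ?thesis
    proof (cases "subst G f = (\<lambda>_. 0)")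
      case True
      have "lin n f (proj n G x) = lin n (subst G f) x" by (rule lin_proj[OF G])
      also have "\<dots> = 0" using True by (simp add: lin_def)
      finally show ?thesis by simp
    next
      case nz: False
      then have "subst G f \<in> reduced_ineqs n S G" using f False unfolding reduced_ineqs_def by auto
      then show ?thesis using x unfolding sols_def by (auto simp: lin_proj[OF G])
    qed
  qed
  then show "x \<in> {x\<in>vecs n. proj n G x \<in> sols n S}" using xv proj_vecs[OF G xv] unfolding sols_def by auto
next
  fix x assume x: "x \<in> {x\<in>vecs n. proj n G x \<in> sols n S}"
  then show "x \<in> sols n (reduced_ineqs n S G)"
    unfolding sols_def reduced_ineqs_def by (auto simp: lin_proj[OF G, symmetric])
qed

lemma reduced_interior:
  assumes S: "ineq_set n S" and G: "rref n G" and GE: "eq_sols n G = eq_sols n (implied_eqs n S)"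
  shows "\<exists>z\<in>vecs n. \<forall>r\<in>reduced_ineqs n S G. lin n r z > 0"
proof -
  obtain x0 where x0: "x0 \<in> sols n S" "\<And>f. f \<in> S \<Longrightarrow> \<not> implied_eq n S f \<Longrightarrow> lin n f x0 > 0"
    using interior_pt[OF S] by blast
  have xe: "x0 \<in> eq_sols n G" using sols_in_eq[OF x0(1)] GE by simp
  have "\<forall>r\<in>reduced_ineqs n S G. lin n r x0 > 0"
    unfolding reduced_ineqs_def using x0(2) by (auto simp: lin_subst_eq[OF G xe])
  then show ?thesis using x0(1) unfolding sols_def by auto
qed


lemma lin_neg: "lin n f (\<lambda>i. - v i) = - lin n f v"
  by (simp add: lin_def sum_negf)

lemma facet:
  assumes M1: "M1 \<subseteq> vecs n" "finite M1" and M2: "M2 \<subseteq> vecs n" "finite M2"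
    and eq: "sols n M1 = sols n M2" and m: "m \<in> M1" "\<not> redundant n M1 m"
    and z: "z \<in> vecs n" "\<forall>m'\<in>M1. lin n m' z > 0"
  shows "\<exists>m2\<in>M2. triv_equiv m m2"
proof -
  obtain y where y: "y \<in> sols n (M1 - {m})" "lin n m y < 0"
    using m unfolding redundant_def by (auto simp: not_le)
  have mz: "lin n m z > 0" using z m by auto
  define w where "w = (\<lambda>i. (- lin n m y) * z i + lin n m z * y i)"
  have lw: "lin n f w = (- lin n m y) * lin n f z + lin n m z * lin n f y" for f
    unfolding w_def by (rule lin_comb)
  have lmw: "lin n m w = 0" by (simp add: lw algebra_simps)
  have pos: "lin n m' w > 0" if "m' \<in> M1 - {m}" for m'
  proof -
    have "(- lin n m y) * lin n m' z > 0" using y(2) z that by (intro mult_pos_pos) auto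
    moreover have "lin n m z * lin n m' y \<ge> 0" using mz y(1) that unfolding sols_def by auto
    ultimately show ?thesis by (simp add: lw)
  qed
  have wv: "w \<in> vecs n" using z(1) y(1) unfolding w_def sols_def vecs_def by auto
  have "w \<in> sols n M1" unfolding sols_def
  proof (intro CollectI conjI ballI wv)
    fix f assume f: "f \<in> M1"
    show "0 \<le> lin n f w"
    proof (cases "f = m")
      case True then show ?thesis using lmw by simp
    next
      case False then show ?thesis using pos[of f] f by simp
    qed
  qed
  then have w2: "w \<in> sols n M2" using eq by simp
  define T where "T = {m2\<in>M2. lin n m2 w = 0}"
  have posT: "lin n m2 w > 0" if "m2 \<in> M2 - T" for m2
    using w2 that unfolding T_def sols_def by force
  obtain K where K: "K \<ge> 0" "\<forall>f\<in>M2 - T. K * lin n f w + (- lin n f z) \<ge> 0"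
    using big_K[of "M2 - T" "\<lambda>f. lin n f w" "\<lambda>f. - lin n f z"] M2(2) posT by auto
  have "\<exists>m2\<in>T. lin n m2 z > 0"
  proof (rule ccontr)
    assume "\<not> ?thesis"
    then have nT: "\<forall>m2\<in>T. lin n m2 z \<le> 0" by (auto simp: not_less)
    define u where "u = (\<lambda>i. K * w i + (-1) * z i)"
    have lu: "lin n f u = K * lin n f w + (-1) * lin n f z" for f unfolding u_def by (rule lin_comb)
    have uv: "u \<in> vecs n" using wv z(1) unfolding u_def vecs_def by auto
    have "u \<in> sols n M2" unfolding sols_def
    proof (intro CollectI conjI ballI uv)
      fix f assume f: "f \<in> M2"
      show "0 \<le> lin n f u"
      proof (cases "f \<in> T")
        case True then show ?thesis using nT unfolding lu T_def by auto
      next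
        case False then show ?thesis using K f unfolding lu by auto
      qed
    qed
    then have "u \<in> sols n M1" using eq by simp
    then have "lin n m u \<ge> 0" using m unfolding sols_def by auto
    moreover have "lin n m u < 0" using mz lmw unfolding lu by simp
    ultimately show False by simp
  qed
  then obtain m2 where m2: "m2 \<in> T" "lin n m2 z > 0" by blast
  have m2M: "m2 \<in> M2" and m2w: "lin n m2 w = 0" using m2 unfolding T_def by auto
  have half: "lin n m2 v \<ge> 0" if v: "v \<in> vecs n" "lin n m v \<ge> 0" for v
  proof -
    have finM: "finite (M1 - {m})" using M1 by auto
    obtain K' where K': "K' \<ge> 0" "\<forall>f\<in>M1 - {m}. K' * lin n f w + lin n f v \<ge> 0"
      using big_K[OF finM, of "\<lambda>f. lin n f w" "\<lambda>f. lin n f v"] pos by auto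
    define u where "u = (\<lambda>i. K' * w i + 1 * v i)"
    have lu: "lin n f u = K' * lin n f w + 1 * lin n f v" for f unfolding u_def by (rule lin_comb)
    have uv: "u \<in> vecs n" using wv v(1) unfolding u_def vecs_def by auto
    have "u \<in> sols n M1" unfolding sols_def
    proof (intro CollectI conjI ballI uv)
      fix f assume f: "f \<in> M1"
      show "0 \<le> lin n f u"
      proof (cases "f = m")
        case True then show ?thesis using v(2) lmw unfolding lu by simp
      next
        case False then show ?thesis using K' f unfolding lu by auto
      qed
    qed
    then have "u \<in> sols n M2" using eq by simp
    then have "lin n m2 u \<ge> 0" using m2M unfolding sols_def by auto
    then show ?thesis using m2w unfolding lu by simp
  qed
  have kern: "lin n m2 v = 0" if v: "v \<in> vecs n" "lin n m v = 0" for v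
  proof -
    have "lin n m2 v \<ge> 0" using half v by simp
    moreover have "(\<lambda>i. - v i) \<in> vecs n" using v(1) unfolding vecs_def by auto
    then have "lin n m2 (\<lambda>i. - v i) \<ge> 0" using half[of "\<lambda>i. - v i"] v(2) by (simp add: lin_neg)
    ultimately show ?thesis by (simp add: lin_neg)
  qed
  define c where "c = lin n m2 z / lin n m z"
  have cpos: "c > 0" unfolding c_def using mz m2(2) by simp
  have m2c: "m2 i = c * m i" for i
  proof (cases "i < n")
    case False
    then have "m2 i = 0" "m i = 0" using m2M M2(1) m M1(1) unfolding vecs_def by auto
    then show ?thesis by simp
  next
    case True
    define v where "v = (\<lambda>k. 1 * (if k = i then 1 else 0) + (- (m i / lin n m z)) * z k)"
    have lv: "lin n f v = 1 * f i + (- (m i / lin n m z)) * lin n f z" for f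
      unfolding v_def lin_comb lin_unit[OF True] by simp
    have vv: "v \<in> vecs n" using True z(1) unfolding v_def vecs_def by auto
    have "lin n m v = 0" unfolding lv using mz by simp
    then have "lin n m2 v = 0" using kern vv by simp
    then have "m2 i = m i / lin n m z * lin n m2 z" unfolding lv by simp
    then show ?thesis unfolding c_def by simp
  qed
  have "m = (\<lambda>i. (1 / c) * m2 i)" using cpos by (auto simp: m2c)
  then have "triv_equiv m m2" unfolding triv_equiv_def using cpos
    by (intro exI[of _ "1/c"]) simp
  then show ?thesis using m2M by blast
qed

lemma triv_sym: "triv_equiv f g \<Longrightarrow> triv_equiv g f"
  unfolding triv_equiv_def
proof (elim exE conjE)
  fix c :: real assume c: "c > 0" "f = (\<lambda>i. c * g i)"
  then have "g = (\<lambda>i. (1/c) * f i)" by auto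
  then show "\<exists>c>0. g = (\<lambda>i. c * f i)" using c(1) by (intro exI[of _ "1/c"]) simp
qed

lemma triv_trans: "triv_equiv f g \<Longrightarrow> triv_equiv g h \<Longrightarrow> triv_equiv f h"
  unfolding triv_equiv_def
proof (elim exE conjE)
  fix c d :: real assume c: "c > 0" "f = (\<lambda>i. c * g i)" and d: "d > 0" "g = (\<lambda>i. d * h i)"
  then have "f = (\<lambda>i. (c * d) * h i)" by auto
  then show "\<exists>c>0. f = (\<lambda>i. c * h i)" using c(1) d(1) by (intro exI[of _ "c * d"]) simp
qed

lemma irred_no_dup:
  assumes "m1 \<in> M" "m2 \<in> M" "m1 \<noteq> m2" "triv_equiv m1 m2"
  shows "redundant n M m1"
proof -
  obtain c where c: "c > 0" "m1 = (\<lambda>i. c * m2 i)" using assms(4) unfolding triv_equiv_def by auto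
  have "lin n m1 x = c * lin n m2 x" for x unfolding c(2) lin_def by (simp add: sum_distrib_left mult.assoc)
  then show ?thesis unfolding redundant_def sols_def using assms c(1) by auto
qed

lemma card_le_triv:
  assumes B: "finite B" and AB: "\<forall>f\<in>A. \<exists>g\<in>B. triv_equiv f g" and irr: "\<forall>f\<in>A. \<not> redundant n A f"
  shows "card A \<le> card B"
proof -
  define phi where "phi f = (SOME g. g \<in> B \<and> triv_equiv f g)" for f
  have phi: "phi f \<in> B \<and> triv_equiv f (phi f)" if "f \<in> A" for f
    unfolding phi_def using AB that by (metis (mono_tags, lifting) someI_ex)
  have "inj_on phi A"
  proof (rule inj_onI)
    fix f1 f2 assume f: "f1 \<in> A" "f2 \<in> A" "phi f1 = phi f2"
    have "triv_equiv f1 f2" using phi[OF f(1)] phi[OF f(2)] f(3) triv_sym triv_trans by metis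
    then show "f1 = f2" using irred_no_dup[OF f(1) f(2)] irr f(1) by blast
  qed
  moreover have "phi ` A \<subseteq> B" using phi by auto
  ultimately show ?thesis using B by (rule card_inj_on_le)
qed


lemma reduced_fin_vecs:
  assumes "ineq_set n S" "rref n G"
  shows "finite (reduced_ineqs n S G) \<and> reduced_ineqs n S G \<subseteq> vecs n"
proof
  have "reduced_ineqs n S G \<subseteq> subst G ` S" unfolding reduced_ineqs_def by auto
  then show "finite (reduced_ineqs n S G)" using assms(1) unfolding ineq_set_def by (meson finite_surj)
  show "reduced_ineqs n S G \<subseteq> vecs n"
    using assms subst_vecs unfolding reduced_ineqs_def ineq_set_def by blast
qed

lemma one_dir:
  assumes S1: "ineq_set n S1" and G: "rref n G" and GE1: "eq_sols n G = eq_sols n (implied_eqs n S1)"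
    and S2: "ineq_set n S2"
    and M1: "min_char_set n (reduced_ineqs n S1 G) M1" and M2: "min_char_set n (reduced_ineqs n S2 G) M2"
    and eqM: "sols n M1 = sols n M2"
  shows "\<forall>m\<in>M1. \<exists>m2\<in>M2. triv_equiv m m2"
proof
  fix m assume m: "m \<in> M1"
  have R1: "finite (reduced_ineqs n S1 G)" "reduced_ineqs n S1 G \<subseteq> vecs n"
    using reduced_fin_vecs[OF S1 G] by auto
  have R2: "finite (reduced_ineqs n S2 G)" "reduced_ineqs n S2 G \<subseteq> vecs n"
    using reduced_fin_vecs[OF S2 G] by auto
  have M1s: "M1 \<subseteq> reduced_ineqs n S1 G" "\<forall>f\<in>M1. \<not> redundant n M1 f" using M1 unfolding min_char_set_def by auto
  have M2s: "M2 \<subseteq> reduced_ineqs n S2 G" using M2 unfolding min_char_set_def by auto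
  obtain z where z: "z \<in> vecs n" "\<forall>r\<in>reduced_ineqs n S1 G. lin n r z > 0"
    using reduced_interior[OF S1 G GE1] by blast
  show "\<exists>m2\<in>M2. triv_equiv m m2"
  proof (rule facet[OF _ _ _ _ eqM m])
    show "M1 \<subseteq> vecs n" "finite M1" using M1s R1 finite_subset by blast+
    show "M2 \<subseteq> vecs n" "finite M2" using M2s R2 finite_subset by blast+
    show "\<not> redundant n M1 m" using M1s m by blast
    show "z \<in> vecs n" "\<forall>m'\<in>M1. 0 < lin n m' z" using z M1s by auto
  qed
qed

theorem theorem7:
  fixes n :: nat and Sf Sg Gf Gg Mf Mg :: "(nat \<Rightarrow> real) set"
  assumes "ineq_set n Sf" and "ineq_set n Sg"
    and "sols n Sf = sols n Sg"
    and "gj_reduced_form n (implied_eqs n Sf) Gf"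
    and "gj_reduced_form n (implied_eqs n Sg) Gg"
    and "min_char_set n (reduced_ineqs n Sf Gf) Mf"
    and "min_char_set n (reduced_ineqs n Sg Gg) Mg"
  shows "Gf = Gg \<and> triv_equiv_sets Mf Mg"
proof -
  have Gf: "rref n Gf" and GEf: "eq_sols n Gf = eq_sols n (implied_eqs n Sf)" using gj_rref[OF assms(4)] by auto
  have Gg: "rref n Gg" and GEg: "eq_sols n Gg = eq_sols n (implied_eqs n Sg)" using gj_rref[OF assms(5)] by auto
  have EE: "eq_sols n (implied_eqs n Sf) = eq_sols n (implied_eqs n Sg)"
    unfolding eq_sols_implied[OF assms(1)] eq_sols_implied[OF assms(2)] assms(3) ..
  have GG: "eq_sols n Gf = eq_sols n Gg" using GEf GEg EE by simp
  have eqG: "Gf = Gg" using rref_unique_sub[OF Gf Gg GG] rref_unique_sub[OF Gg Gf GG[symmetric]] by blast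
  have GEg': "eq_sols n Gf = eq_sols n (implied_eqs n Sg)" using GEg eqG by simp
  have Mg': "min_char_set n (reduced_ineqs n Sg Gf) Mg" using assms(7) eqG by simp
  have "sols n (reduced_ineqs n Sf Gf) = sols n (reduced_ineqs n Sg Gf)"
    unfolding sols_reduced[OF assms(1) Gf GEf] sols_reduced[OF assms(2) Gf GEg'] assms(3) ..
  then have eqM: "sols n Mf = sols n Mg" using assms(6) Mg' unfolding min_char_set_def by simp
  have d1: "\<forall>m\<in>Mf. \<exists>m2\<in>Mg. triv_equiv m m2"
    by (rule one_dir[OF assms(1) Gf GEf assms(2) assms(6) Mg' eqM])
  have d2: "\<forall>m\<in>Mg. \<exists>m2\<in>Mf. triv_equiv m m2"
    by (rule one_dir[OF assms(2) Gf GEg' assms(1) Mg' assms(6) eqM[symmetric]])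
  have finf: "finite Mf" using assms(6) reduced_fin_vecs[OF assms(1) Gf] finite_subset
    unfolding min_char_set_def by blast
  have fing: "finite Mg" using Mg' reduced_fin_vecs[OF assms(2) Gf] finite_subset
    unfolding min_char_set_def by blast
  have irf: "\<forall>f\<in>Mf. \<not> redundant n Mf f" using assms(6) unfolding min_char_set_def by blast
  have irg: "\<forall>f\<in>Mg. \<not> redundant n Mg f" using Mg' unfolding min_char_set_def by blast
  have "card Mf = card Mg"
    using card_le_triv[OF fing d1 irf] card_le_triv[OF finf d2 irg] by simp
  then show ?thesis unfolding triv_equiv_sets_def using eqG d1 d2 by blast
qed

end
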